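(* Let $\alpha\in(0,1/2)$, $p_0=P(Y=1\mid D=0)$, $p_1=P(Y=1\mid D=1)$. In the binary model, the set $\{-1,1\}$ is a valid $(1-\alpha)$ prediction set given the observed data if and only if $p_1-p_0\ge1-\alpha$ or $p_0-p_1\ge1-\alpha$; in the first case $\{1\}$, and in the second case $\{-1\}$, is also a valid $(1-\alpha)$ prediction set given the observed data.
   Context: Binary treatment/outcome model: treatment $D\in\{0,1\}$ randomized; $Y_0,Y_1\in\{0,1\}$ potential outcomes; $\mathrm{ITE}=Y_1-Y_0\in\{-1,0,1\}$. A joint distribution of $(Y_0,Y_1)$ is compatible with the observed data if $P(Y_0=1)=p_0$ and $P(Y_1=1)=p_1$. A set $S$ is a valid $(1-\alpha)$ prediction set given the observed data if $P(Y_1-Y_0\in S)\ge1-\alpha$ for every compatible joint distribution. *)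

theory Defs
  imports "HOL-Probability.Probability"
begin

text \<open>A joint distribution of the potential outcomes (Y0, Y1) is a probability
  mass function on pairs of integers supported on {0,1} x {0,1}; the first
  component is Y0, the second Y1.\<close>

definition compatible :: "real \<Rightarrow> real \<Rightarrow> (int \<times> int) pmf \<Rightarrow> bool" where
  "compatible p0 p1 J \<longleftrightarrow>
     set_pmf J \<subseteq> {0,1} \<times> {0,1} \<and>
     measure_pmf.prob J {y. fst y = 1} = p0 \<and>
     measure_pmf.prob J {y. snd y = 1} = p1"

definition valid_pred_set :: "real \<Rightarrow> real \<Rightarrow> real \<Rightarrow> int set \<Rightarrow> bool" where
  "valid_pred_set \<alpha> p0 p1 S \<longleftrightarrow>
     (\<forall>J. compatible p0 p1 J \<longrightarrow>
        measure_pmf.prob J {y. snd y - fst y \<in> S} \<ge> 1 - \<alpha>)"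

end

theory Submission imports Defs begin
definition F :: "(int\<times>int) set" where "F = {0,1}\<times>{0,1}"
lemma probF:
  assumes "set_pmf J \<subseteq> F"
  shows "measure_pmf.prob J A = sum (pmf J) (A \<inter> F)"
proof -
  have "measure_pmf.prob J A = measure_pmf.prob J (A \<inter> F)"
    using measure_Int_set_pmf[of J A] measure_Int_set_pmf[of J "A \<inter> F"] assms
    by (metis Int_assoc inf.absorb_iff2 inf_commute)
  also have "\<dots> = sum (pmf J) (A \<inter> F)"
    by (rule measure_measure_pmf_finite) (simp add: F_def)
  finally show ?thesis .
qed
lemma F4: "F = {(0,0),(0,1),(1,0),(1,1)}" by (auto simp: F_def)
lemma main:
  assumes "set_pmf J \<subseteq> F"
  shows "pmf J (0,0) + pmf J (0,1) + pmf J (1,0) + pmf J (1,1) = 1"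
    "measure_pmf.prob J {y. fst y = 1} = pmf J (1,0) + pmf J (1,1)"
    "measure_pmf.prob J {y. snd y = 1} = pmf J (0,1) + pmf J (1,1)"
    "measure_pmf.prob J {y. snd y - fst y \<in> {-1,1}} = pmf J (0,1) + pmf J (1,0)"
    "measure_pmf.prob J {y. snd y - fst y \<in> {1}} = pmf J (0,1)"
    "measure_pmf.prob J {y. snd y - fst y \<in> {-1}} = pmf J (1,0)"
proof -
  have "1 = measure_pmf.prob J UNIV" by simp
  also have "\<dots> = sum (pmf J) F" using probF[OF assms, of UNIV] by simp
  finally show "pmf J (0,0) + pmf J (0,1) + pmf J (1,0) + pmf J (1,1) = 1" by (simp add: F4)
  have "{y. fst y = 1} \<inter> F = {(1,0),(1,1)}" by (auto simp: F4)
  then show "measure_pmf.prob J {y. fst y = 1} = pmf J (1,0) + pmf J (1,1)" using probF[OF assms] by simp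
  have "{y. snd y = 1} \<inter> F = {(0,1),(1,1)}" by (auto simp: F4)
  then show "measure_pmf.prob J {y. snd y = 1} = pmf J (0,1) + pmf J (1,1)" using probF[OF assms] by simp
  have "{y. snd y - fst y \<in> {-1,1}} \<inter> F = {(0,1),(1,0)}" by (auto simp: F4)
  then show "measure_pmf.prob J {y. snd y - fst y \<in> {-1,1}} = pmf J (0,1) + pmf J (1,0)" using probF[OF assms] by simp
  have "{y. snd y - fst y \<in> {1}} \<inter> F = {(0,1)}" by (auto simp: F4)
  then show "measure_pmf.prob J {y. snd y - fst y \<in> {1}} = pmf J (0,1)" using probF[OF assms] by simp
  have "{y. snd y - fst y \<in> {-1}} \<inter> F = {(1,0)}" by (auto simp: F4)
  then show "measure_pmf.prob J {y. snd y - fst y \<in> {-1}} = pmf J (1,0)" using probF[OF assms] by simp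
qed

theorem mainTheorem7:
  fixes \<alpha> p0 p1 :: real
  assumes "0 < \<alpha>" and "\<alpha> < 1/2"
    and "0 \<le> p0" and "p0 \<le> 1" and "0 \<le> p1" and "p1 \<le> 1"
  shows "(valid_pred_set \<alpha> p0 p1 {-1, 1} \<longleftrightarrow> (p1 - p0 \<ge> 1 - \<alpha> \<or> p0 - p1 \<ge> 1 - \<alpha>))
    \<and> (p1 - p0 \<ge> 1 - \<alpha> \<longrightarrow> valid_pred_set \<alpha> p0 p1 {1})
    \<and> (p0 - p1 \<ge> 1 - \<alpha> \<longrightarrow> valid_pred_set \<alpha> p0 p1 {-1})"
proof (intro conjI impI iffI)
  have comp: "set_pmf J \<subseteq> F \<and> pmf J (1,0) + pmf J (1,1) = p0 \<and> pmf J (0,1) + pmf J (1,1) = p1"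
    if "compatible p0 p1 J" for J
    using that main[of J] unfolding compatible_def F_def by auto
  have nn: "pmf J x \<ge> 0" for J and x :: "int \<times> int" by simp
  show "valid_pred_set \<alpha> p0 p1 {1}" if "p1 - p0 \<ge> 1 - \<alpha>"
    unfolding valid_pred_set_def
  proof (intro allI impI)
    fix J assume "compatible p0 p1 J"
    from comp[OF this] have c: "set_pmf J \<subseteq> F" "pmf J (1,0) + pmf J (1,1) = p0" "pmf J (0,1) + pmf J (1,1) = p1" by auto
    from c main[OF c(1)] nn[of J "(1,0)"] that show "measure_pmf.prob J {y. snd y - fst y \<in> {1}} \<ge> 1 - \<alpha>" by linarith
  qed
  show "valid_pred_set \<alpha> p0 p1 {-1}" if "p0 - p1 \<ge> 1 - \<alpha>"
    unfolding valid_pred_set_def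
  proof (intro allI impI)
    fix J assume "compatible p0 p1 J"
    from comp[OF this] have c: "set_pmf J \<subseteq> F" "pmf J (1,0) + pmf J (1,1) = p0" "pmf J (0,1) + pmf J (1,1) = p1" by auto
    from c main[OF c(1)] nn[of J "(0,1)"] that show "measure_pmf.prob J {y. snd y - fst y \<in> {-1}} \<ge> 1 - \<alpha>" by linarith
  qed
  show "valid_pred_set \<alpha> p0 p1 {-1,1}" if "p1 - p0 \<ge> 1 - \<alpha> \<or> p0 - p1 \<ge> 1 - \<alpha>"
    unfolding valid_pred_set_def
  proof (intro allI impI)
    fix J assume "compatible p0 p1 J"
    from comp[OF this] have c: "set_pmf J \<subseteq> F" "pmf J (1,0) + pmf J (1,1) = p0" "pmf J (0,1) + pmf J (1,1) = p1" by auto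
    from c main[OF c(1)] nn[of J "(0,1)"] nn[of J "(1,0)"] that show "measure_pmf.prob J {y. snd y - fst y \<in> {-1,1}} \<ge> 1 - \<alpha>" by linarith
  qed
  assume V: "valid_pred_set \<alpha> p0 p1 {-1,1}"
  show "p1 - p0 \<ge> 1 - \<alpha> \<or> p0 - p1 \<ge> 1 - \<alpha>"
  proof (rule ccontr)
    assume C: "\<not> ?thesis"
    define m where "m = min p0 p1"
    define xs :: "((int \<times> int) \<times> real) list" where
      "xs = [((0,0),1 - max p0 p1),((0,1),p1-m),((1,0),p0-m),((1,1),m)]"
    have wf: "pmf_of_list_wf xs"
      unfolding pmf_of_list_wf_def xs_def m_def using assms by auto
    define J where "J = pmf_of_list xs"
    have sJ: "set_pmf J \<subseteq> F" using set_pmf_of_list[OF wf] unfolding J_def xs_def F4 by auto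
    have p: "pmf J (0,0) = 1 - max p0 p1" "pmf J (0,1) = p1 - m" "pmf J (1,0) = p0 - m" "pmf J (1,1) = m"
      unfolding J_def using pmf_pmf_of_list[OF wf] by (simp_all add: xs_def)
    have "compatible p0 p1 J" unfolding compatible_def
      using sJ main[OF sJ] p unfolding F_def by simp
    with V have "measure_pmf.prob J {y. snd y - fst y \<in> {-1,1}} \<ge> 1 - \<alpha>"
      unfolding valid_pred_set_def by blast
    with main[OF sJ] p C show False unfolding m_def by auto
  qed
qed
end
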